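(* Let $G$ be a finite abelian group and $M$ a finite $\hat G$-linear inverse monoid. Then $M$ is left inductive and right inductive.
   Context: $\hat G=G\sqcup\{0\}$ with $0$ absorbing. $\mathrm{Vect}_{\hat G}$: objects are finite pointed sets with an action of $\hat G$ ($0v=0$, $g0=0$) such that $G$ acts freely on nonzero elements; morphisms $f$ satisfy $f(0)=0$, $f(gv)=gf(v)$, $f(v_1)=f(v_2)\neq0\Rightarrow Gv_1=Gv_2$. A $\hat G$-linear monoid is a finite monoid $M$ with absorbing element $0_M$ containing $G$ as a subgroup of units commuting with all of $M$, with $G$ acting freely by translation on $M\setminus\{0_M\}$. $M$ is inverse if each $x$ has a unique $x^*$ with $xx^*x=x$, $x^*xx^*=x^*$. For $a\in M$: $J(a)=MaM$, $I(a)=\{x\in J(a):MxM\neq J(a)\}$, $P(a)=(J(a)\setminus I(a))\cup\{0\}$, with left translation $m\cdot x=mx$ if $mx\in J(a)\setminus I(a)$, else $0$, and right translation analogously. $M$ is left (resp. right) inductive if for every idempotent $e$, every left (resp. right) translation on $P(e)$ is a morphism of $\mathrm{Vect}_{\hat G}$ (so $P(e)$ is a $\hat G$-linear representation of $M$, resp. $M^{\mathrm{op}}$). *)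

theory Defs
  imports Main
begin

text \<open>The group G is a subset of M
  (a subgroup of the units of M). The hat-G action on M is by multiplication, where
  the extra absorbing element 0 of hat-G acts as 0_M.\<close>

definition finite_monoid_with_zero :: "'m set \<Rightarrow> ('m \<Rightarrow> 'm \<Rightarrow> 'm) \<Rightarrow> 'm \<Rightarrow> 'm \<Rightarrow> bool" where
  "finite_monoid_with_zero M mult one zero \<longleftrightarrow>
     finite M \<and> one \<in> M \<and> zero \<in> M \<and>
     (\<forall>x\<in>M. \<forall>y\<in>M. mult x y \<in> M) \<and>
     (\<forall>x\<in>M. \<forall>y\<in>M. \<forall>z\<in>M. mult (mult x y) z = mult x (mult y z)) \<and>
     (\<forall>x\<in>M. mult one x = x \<and> mult x one = x) \<and>
     (\<forall>x\<in>M. mult zero x = zero \<and> mult x zero = zero)"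

definition finite_abelian_subgroup_of_units :: "'m set \<Rightarrow> ('m \<Rightarrow> 'm \<Rightarrow> 'm) \<Rightarrow> 'm \<Rightarrow> 'm set \<Rightarrow> bool" where
  "finite_abelian_subgroup_of_units M mult one G \<longleftrightarrow>
     finite G \<and> G \<subseteq> M \<and> one \<in> G \<and>
     (\<forall>g\<in>G. \<forall>h\<in>G. mult g h \<in> G) \<and>
     (\<forall>g\<in>G. \<exists>h\<in>G. mult g h = one \<and> mult h g = one) \<and>
     (\<forall>g\<in>G. \<forall>h\<in>G. mult g h = mult h g)"

definition hatG_linear_monoid :: "'m set \<Rightarrow> ('m \<Rightarrow> 'm \<Rightarrow> 'm) \<Rightarrow> 'm \<Rightarrow> 'm \<Rightarrow> 'm set \<Rightarrow> bool" where
  "hatG_linear_monoid M mult one zero G \<longleftrightarrow>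
     finite_monoid_with_zero M mult one zero \<and>
     finite_abelian_subgroup_of_units M mult one G \<and>
     (\<forall>g\<in>G. \<forall>x\<in>M. mult g x = mult x g) \<and>
     (\<forall>g\<in>G. \<forall>x\<in>M - {zero}. mult g x = x \<longrightarrow> g = one)"

definition inverse_monoid :: "'m set \<Rightarrow> ('m \<Rightarrow> 'm \<Rightarrow> 'm) \<Rightarrow> bool" where
  "inverse_monoid M mult \<longleftrightarrow>
     (\<forall>x\<in>M. \<exists>!y. y \<in> M \<and> mult (mult x y) x = x \<and> mult (mult y x) y = y)"

definition idempotent :: "'m set \<Rightarrow> ('m \<Rightarrow> 'm \<Rightarrow> 'm) \<Rightarrow> 'm \<Rightarrow> bool" where
  "idempotent M mult e \<longleftrightarrow> e \<in> M \<and> mult e e = e"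

definition Jideal :: "'m set \<Rightarrow> ('m \<Rightarrow> 'm \<Rightarrow> 'm) \<Rightarrow> 'm \<Rightarrow> 'm set" where
  "Jideal M mult a = {mult (mult x a) y | x y. x \<in> M \<and> y \<in> M}"

definition Iideal :: "'m set \<Rightarrow> ('m \<Rightarrow> 'm \<Rightarrow> 'm) \<Rightarrow> 'm \<Rightarrow> 'm set" where
  "Iideal M mult a = {x \<in> Jideal M mult a. Jideal M mult x \<noteq> Jideal M mult a}"

definition Pset :: "'m set \<Rightarrow> ('m \<Rightarrow> 'm \<Rightarrow> 'm) \<Rightarrow> 'm \<Rightarrow> 'm \<Rightarrow> 'm set" where
  "Pset M mult zero a = (Jideal M mult a - Iideal M mult a) \<union> {zero}"

definition ltrans :: "'m set \<Rightarrow> ('m \<Rightarrow> 'm \<Rightarrow> 'm) \<Rightarrow> 'm \<Rightarrow> 'm \<Rightarrow> 'm \<Rightarrow> 'm \<Rightarrow> 'm" where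
  "ltrans M mult zero a m x =
     (if x = zero then zero
      else if mult m x \<in> Jideal M mult a - Iideal M mult a then mult m x else zero)"

definition rtrans :: "'m set \<Rightarrow> ('m \<Rightarrow> 'm \<Rightarrow> 'm) \<Rightarrow> 'm \<Rightarrow> 'm \<Rightarrow> 'm \<Rightarrow> 'm \<Rightarrow> 'm" where
  "rtrans M mult zero a m x =
     (if x = zero then zero
      else if mult x m \<in> Jideal M mult a - Iideal M mult a then mult x m else zero)"

definition vect_obj :: "('m \<Rightarrow> 'm \<Rightarrow> 'm) \<Rightarrow> 'm \<Rightarrow> 'm \<Rightarrow> 'm set \<Rightarrow> 'm set \<Rightarrow> bool" where
  "vect_obj mult one zero G P \<longleftrightarrow>
     finite P \<and> zero \<in> P \<and>
     (\<forall>g\<in>insert zero G. \<forall>v\<in>P. mult g v \<in> P) \<and>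
     (\<forall>v\<in>P. mult zero v = zero) \<and>
     (\<forall>g\<in>insert zero G. mult g zero = zero) \<and>
     (\<forall>v\<in>P. mult one v = v) \<and>
     (\<forall>g\<in>G. \<forall>h\<in>G. \<forall>v\<in>P. mult g (mult h v) = mult (mult g h) v) \<and>
     (\<forall>g\<in>G. \<forall>v\<in>P - {zero}. mult g v = v \<longrightarrow> g = one)"

definition orbit :: "('m \<Rightarrow> 'm \<Rightarrow> 'm) \<Rightarrow> 'm set \<Rightarrow> 'm \<Rightarrow> 'm set" where
  "orbit mult G v = (\<lambda>g. mult g v) ` G"

definition vect_mor :: "('m \<Rightarrow> 'm \<Rightarrow> 'm) \<Rightarrow> 'm \<Rightarrow> 'm set \<Rightarrow> 'm set \<Rightarrow> ('m \<Rightarrow> 'm) \<Rightarrow> bool" where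
  "vect_mor mult zero G P f \<longleftrightarrow>
     (\<forall>v\<in>P. f v \<in> P) \<and>
     f zero = zero \<and>
     (\<forall>g\<in>insert zero G. \<forall>v\<in>P. f (mult g v) = mult g (f v)) \<and>
     (\<forall>v1\<in>P. \<forall>v2\<in>P. f v1 = f v2 \<and> f v1 \<noteq> zero \<longrightarrow> orbit mult G v1 = orbit mult G v2)"

definition left_inductive :: "'m set \<Rightarrow> ('m \<Rightarrow> 'm \<Rightarrow> 'm) \<Rightarrow> 'm \<Rightarrow> 'm \<Rightarrow> 'm set \<Rightarrow> bool" where
  "left_inductive M mult one zero G \<longleftrightarrow>
     (\<forall>e. idempotent M mult e \<longrightarrow>
        vect_obj mult one zero G (Pset M mult zero e) \<and>
        (\<forall>m\<in>M. vect_mor mult zero G (Pset M mult zero e) (ltrans M mult zero e m)))"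

definition right_inductive :: "'m set \<Rightarrow> ('m \<Rightarrow> 'm \<Rightarrow> 'm) \<Rightarrow> 'm \<Rightarrow> 'm \<Rightarrow> 'm set \<Rightarrow> bool" where
  "right_inductive M mult one zero G \<longleftrightarrow>
     (\<forall>e. idempotent M mult e \<longrightarrow>
        vect_obj mult one zero G (Pset M mult zero e) \<and>
        (\<forall>m\<in>M. vect_mor mult zero G (Pset M mult zero e) (rtrans M mult zero e m)))"

end

theory Submission
  imports Defs
begin

locale im =
  fixes M :: "'m set" and mult :: "'m \<Rightarrow> 'm \<Rightarrow> 'm" (infixl "\<cdot>" 70) and one zero :: 'm and G :: "'m set"
  assumes hl: "hatG_linear_monoid M mult one zero G" and inv: "inverse_monoid M mult"
begin

lemma hl_parts0: "finite_monoid_with_zero M mult one zero"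
  using hl unfolding hatG_linear_monoid_def by (elim conjE) assumption
lemma hl_parts1: "finite_abelian_subgroup_of_units M mult one G"
  using hl unfolding hatG_linear_monoid_def by (elim conjE) assumption
lemma hl_parts2: "\<forall>g\<in>G. \<forall>x\<in>M. g \<cdot> x = x \<cdot> g"
  using hl unfolding hatG_linear_monoid_def by (elim conjE) assumption
lemma hl_parts3: "\<forall>g\<in>G. \<forall>x\<in>M - {zero}. g \<cdot> x = x \<longrightarrow> g = one"
  using hl unfolding hatG_linear_monoid_def by (elim conjE) assumption
lemmas hl_parts = hl_parts0 hl_parts1 hl_parts2 hl_parts3

lemma mon_parts0: "finite M"
  using hl_parts(1) unfolding finite_monoid_with_zero_def by (elim conjE) assumption
lemma mon_parts1: "one \<in> M"
  using hl_parts(1) unfolding finite_monoid_with_zero_def by (elim conjE) assumption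
lemma mon_parts2: "zero \<in> M"
  using hl_parts(1) unfolding finite_monoid_with_zero_def by (elim conjE) assumption
lemma mon_parts3: "\<forall>x\<in>M. \<forall>y\<in>M. x \<cdot> y \<in> M"
  using hl_parts(1) unfolding finite_monoid_with_zero_def by (elim conjE) assumption
lemma mon_parts4: "\<forall>x\<in>M. \<forall>y\<in>M. \<forall>z\<in>M. x \<cdot> y \<cdot> z = x \<cdot> (y \<cdot> z)"
  using hl_parts(1) unfolding finite_monoid_with_zero_def by (elim conjE) assumption
lemma mon_parts5: "\<forall>x\<in>M. one \<cdot> x = x \<and> x \<cdot> one = x"
  using hl_parts(1) unfolding finite_monoid_with_zero_def by (elim conjE) assumption
lemma mon_parts6: "\<forall>x\<in>M. zero \<cdot> x = zero \<and> x \<cdot> zero = zero"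
  using hl_parts(1) unfolding finite_monoid_with_zero_def by (elim conjE) assumption
lemmas mon_parts = mon_parts0 mon_parts1 mon_parts2 mon_parts3 mon_parts4 mon_parts5 mon_parts6

lemma grp_parts0: "finite G"
  using hl_parts(2) unfolding finite_abelian_subgroup_of_units_def by (elim conjE) assumption
lemma grp_parts1: "G \<subseteq> M"
  using hl_parts(2) unfolding finite_abelian_subgroup_of_units_def by (elim conjE) assumption
lemma grp_parts2: "one \<in> G"
  using hl_parts(2) unfolding finite_abelian_subgroup_of_units_def by (elim conjE) assumption
lemma grp_parts3: "\<forall>g\<in>G. \<forall>h\<in>G. g \<cdot> h \<in> G"
  using hl_parts(2) unfolding finite_abelian_subgroup_of_units_def by (elim conjE) assumption
lemma grp_parts4: "\<forall>g\<in>G. \<exists>h\<in>G. g \<cdot> h = one \<and> h \<cdot> g = one"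
  using hl_parts(2) unfolding finite_abelian_subgroup_of_units_def by (elim conjE) assumption
lemma grp_parts5: "\<forall>g\<in>G. \<forall>h\<in>G. g \<cdot> h = h \<cdot> g"
  using hl_parts(2) unfolding finite_abelian_subgroup_of_units_def by (elim conjE) assumption
lemmas grp_parts = grp_parts0 grp_parts1 grp_parts2 grp_parts3 grp_parts4 grp_parts5

lemma fin: "finite M" and one_in[simp]: "one \<in> M" and zero_in[simp]: "zero \<in> M"
  using mon_parts by blast+
lemma cl[simp]: "x \<in> M \<Longrightarrow> y \<in> M \<Longrightarrow> x \<cdot> y \<in> M"
  using mon_parts(4) by blast
lemma assoc[simp]: "x \<in> M \<Longrightarrow> y \<in> M \<Longrightarrow> z \<in> M \<Longrightarrow> x \<cdot> y \<cdot> z = x \<cdot> (y \<cdot> z)"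
  using mon_parts(5) by blast
lemma onel[simp]: "x \<in> M \<Longrightarrow> one \<cdot> x = x" and oner[simp]: "x \<in> M \<Longrightarrow> x \<cdot> one = x"
  using mon_parts(6) by blast+
lemma zl[simp]: "x \<in> M \<Longrightarrow> zero \<cdot> x = zero" and zr[simp]: "x \<in> M \<Longrightarrow> x \<cdot> zero = zero"
  using mon_parts(7) by blast+

lemma GM: "g \<in> G \<Longrightarrow> g \<in> M" using grp_parts(2) by blast
lemma Gcl: "g \<in> G \<Longrightarrow> h \<in> G \<Longrightarrow> g \<cdot> h \<in> G" using grp_parts(4) by blast
lemma Ginv: "g \<in> G \<Longrightarrow> \<exists>h\<in>G. g \<cdot> h = one \<and> h \<cdot> g = one" using grp_parts(5) by (rule bspec)
lemma Gcomm: "g \<in> G \<Longrightarrow> x \<in> M \<Longrightarrow> g \<cdot> x = x \<cdot> g" using hl_parts(3) by blast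
lemma Gfree: "g \<in> G \<Longrightarrow> x \<in> M \<Longrightarrow> x \<noteq> zero \<Longrightarrow> g \<cdot> x = x \<Longrightarrow> g = one" using hl_parts(4) by blast

lemma inv_ex: "x \<in> M \<Longrightarrow> \<exists>!y. y \<in> M \<and> x \<cdot> y \<cdot> x = x \<and> y \<cdot> x \<cdot> y = y"
  using inv unfolding inverse_monoid_def by (rule bspec)

definition star where "star x = (THE y. y \<in> M \<and> x \<cdot> y \<cdot> x = x \<and> y \<cdot> x \<cdot> y = y)"

lemma star: assumes "x \<in> M" shows "star x \<in> M" "x \<cdot> star x \<cdot> x = x" "star x \<cdot> x \<cdot> star x = star x"
proof -
  have "\<exists>!y. y \<in> M \<and> x \<cdot> y \<cdot> x = x \<and> y \<cdot> x \<cdot> y = y" using inv_ex assms(1) .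
  from theI'[OF this] show "star x \<in> M" "x \<cdot> star x \<cdot> x = x" "star x \<cdot> x \<cdot> star x = star x"
    unfolding star_def by auto
qed

lemma star_unique: assumes "x \<in> M" "y \<in> M" "x \<cdot> y \<cdot> x = x" "y \<cdot> x \<cdot> y = y" shows "y = star x"
proof -
  have "\<exists>!y. y \<in> M \<and> x \<cdot> y \<cdot> x = x \<and> y \<cdot> x \<cdot> y = y" using inv_ex assms(1) .
  then have "(THE y'. y' \<in> M \<and> x \<cdot> y' \<cdot> x = x \<and> y' \<cdot> x \<cdot> y' = y') = y"
    by (rule the1_equality) (use assms in simp)
  then show ?thesis unfolding star_def by simp
qed

lemma idem_star: assumes "a \<in> M" "a \<cdot> a = a" shows "star a = a"
  using star_unique[OF assms(1) assms(1)] assms by simp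

lemma idem_comm: assumes e: "e \<in> M" "e \<cdot> e = e" and f: "f \<in> M" "f \<cdot> f = f"
  shows "e \<cdot> f = f \<cdot> e"
proof -
  have ee: "e \<cdot> (e \<cdot> x) = e \<cdot> x" if "x \<in> M" for x using e that assoc[of e e x] by simp
  have ff: "f \<cdot> (f \<cdot> x) = f \<cdot> x" if "x \<in> M" for x using f that assoc[of f f x] by simp
  have idem: "x \<cdot> y \<cdot> (x \<cdot> y) = x \<cdot> y" if x: "x \<in> M" "x \<cdot> x = x" and y: "y \<in> M" "y \<cdot> y = y" for x y
  proof -
    define a where "a = star (x \<cdot> y)"
    have aM: "a \<in> M" using star(1) x y a_def by simp
    have a1: "x \<cdot> y \<cdot> a \<cdot> (x \<cdot> y) = x \<cdot> y" using star(2)[of "x \<cdot> y"] x y a_def by simp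
    have a2: "a \<cdot> (x \<cdot> y) \<cdot> a = a" using star(3)[of "x \<cdot> y"] x y a_def by simp
    have xx: "x \<cdot> (x \<cdot> z) = x \<cdot> z" if "z \<in> M" for z using x that assoc[of x x z] by simp
    have yy: "y \<cdot> (y \<cdot> z) = y \<cdot> z" if "z \<in> M" for z using y that assoc[of y y z] by simp
    have b1: "x \<cdot> y \<cdot> (y \<cdot> a \<cdot> x) \<cdot> (x \<cdot> y) = x \<cdot> y"
      using a1 x y aM by (simp add: xx yy)
    have b2: "(y \<cdot> a \<cdot> x) \<cdot> (x \<cdot> y) \<cdot> (y \<cdot> a \<cdot> x) = y \<cdot> a \<cdot> x"
    proof -
      have "(y \<cdot> a \<cdot> x) \<cdot> (x \<cdot> y) \<cdot> (y \<cdot> a \<cdot> x) = y \<cdot> (a \<cdot> (x \<cdot> y) \<cdot> a) \<cdot> x"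
        using x y aM by (simp add: xx yy)
      then show ?thesis using a2 by simp
    qed
    have ba: "y \<cdot> a \<cdot> x = a" using star_unique[OF _ _ b1 b2] x y aM a_def by simp
    have "a \<cdot> a = a"
    proof -
      have "a \<cdot> a = (y \<cdot> a \<cdot> x) \<cdot> (y \<cdot> a \<cdot> x)" using ba by simp
      also have "\<dots> = y \<cdot> (a \<cdot> (x \<cdot> y) \<cdot> a) \<cdot> x" using x y aM by simp
      also have "\<dots> = a" using a2 ba by simp
      finally show ?thesis .
    qed
    then have "star a = a" using idem_star aM by simp
    moreover have "x \<cdot> y = star a" using star_unique[of a "x \<cdot> y"] a1 a2 aM x y by simp
    ultimately have "x \<cdot> y = a" by simp
    then show ?thesis using \<open>a \<cdot> a = a\<close> by simp
  qed
  have i1: "e \<cdot> f \<cdot> (e \<cdot> f) = e \<cdot> f" using idem e f by blast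
  have i2: "f \<cdot> e \<cdot> (f \<cdot> e) = f \<cdot> e" using idem e f by blast
  have c1: "e \<cdot> f \<cdot> (f \<cdot> e) \<cdot> (e \<cdot> f) = e \<cdot> f"
  proof -
    have "e \<cdot> f \<cdot> (f \<cdot> e) \<cdot> (e \<cdot> f) = (e \<cdot> f) \<cdot> (e \<cdot> f)" using e f by (simp add: ee ff)
    then show ?thesis using i1 by simp
  qed
  have c2: "f \<cdot> e \<cdot> (e \<cdot> f) \<cdot> (f \<cdot> e) = f \<cdot> e"
  proof -
    have "f \<cdot> e \<cdot> (e \<cdot> f) \<cdot> (f \<cdot> e) = (f \<cdot> e) \<cdot> (f \<cdot> e)" using e f by (simp add: ee ff)
    then show ?thesis using i2 by simp
  qed
  have "f \<cdot> e = star (e \<cdot> f)" using star_unique[OF _ _ c1 c2] e f by simp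
  moreover have "star (e \<cdot> f) = e \<cdot> f" using idem_star i1 e f by simp
  ultimately show ?thesis by simp
qed


lemma idem_l: "a \<in> M \<Longrightarrow> a \<cdot> a = a \<Longrightarrow> x \<in> M \<Longrightarrow> a \<cdot> (a \<cdot> x) = a \<cdot> x"
  using assoc[of a a x] by simp

lemma ss_idem: assumes x: "x \<in> M" shows "star x \<cdot> x \<cdot> (star x \<cdot> x) = star x \<cdot> x"
proof -
  have "star x \<cdot> x \<cdot> (star x \<cdot> x) = (star x \<cdot> x \<cdot> star x) \<cdot> x" using x star(1)[OF x] by simp
  then show ?thesis using star(3)[OF x] by simp
qed
lemma ss_idem2: assumes x: "x \<in> M" shows "x \<cdot> star x \<cdot> (x \<cdot> star x) = x \<cdot> star x"
proof -
  have "x \<cdot> star x \<cdot> (x \<cdot> star x) = (x \<cdot> star x \<cdot> x) \<cdot> star x" using x star(1)[OF x] by simp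
  then show ?thesis using star(2)[OF x] by simp
qed

lemma star_mult: assumes m: "m \<in> M" and v: "v \<in> M" shows "star (m \<cdot> v) = star v \<cdot> star m"
proof -
  have sm: "star m \<in> M" and sv: "star v \<in> M" using star m v by auto
  have c: "(v \<cdot> star v) \<cdot> (star m \<cdot> m) = (star m \<cdot> m) \<cdot> (v \<cdot> star v)"
    using idem_comm[OF _ ss_idem2[OF v] _ ss_idem[OF m]] sm sv m v by simp
  have 1: "m \<cdot> v \<cdot> (star v \<cdot> star m) \<cdot> (m \<cdot> v) = m \<cdot> v"
  proof -
    have "m \<cdot> v \<cdot> (star v \<cdot> star m) \<cdot> (m \<cdot> v) = m \<cdot> ((v \<cdot> star v) \<cdot> (star m \<cdot> m)) \<cdot> v"
      using m v sm sv by simp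
    also have "\<dots> = m \<cdot> ((star m \<cdot> m) \<cdot> (v \<cdot> star v)) \<cdot> v" by (simp only: c)
    also have "\<dots> = (m \<cdot> star m \<cdot> m) \<cdot> (v \<cdot> star v \<cdot> v)" using m v sm sv by simp
    also have "\<dots> = m \<cdot> v" using star m v by simp
    finally show ?thesis .
  qed
  have 2: "(star v \<cdot> star m) \<cdot> (m \<cdot> v) \<cdot> (star v \<cdot> star m) = star v \<cdot> star m"
  proof -
    have "(star v \<cdot> star m) \<cdot> (m \<cdot> v) \<cdot> (star v \<cdot> star m) = star v \<cdot> ((star m \<cdot> m) \<cdot> (v \<cdot> star v)) \<cdot> star m"
      using m v sm sv by simp
    also have "\<dots> = star v \<cdot> ((v \<cdot> star v) \<cdot> (star m \<cdot> m)) \<cdot> star m" by (simp only: c)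
    also have "\<dots> = (star v \<cdot> v \<cdot> star v) \<cdot> (star m \<cdot> m \<cdot> star m)" using m v sm sv by simp
    also have "\<dots> = star v \<cdot> star m" using star m v by simp
    finally show ?thesis .
  qed
  show ?thesis using star_unique[OF _ _ 1 2] m v sm sv by simp
qed

lemma key_left: assumes m: "m \<in> M" and v: "v \<in> M" and t: "t \<in> M" and vt: "v = t \<cdot> (m \<cdot> v)"
  shows "v = star m \<cdot> (m \<cdot> v)"
proof -
  define s where "s = m \<cdot> v"
  have sM: "s \<in> M" using s_def m v by simp
  have sm: "star m \<in> M" and sv: "star v \<in> M" and ss: "star s \<in> M" using star m v sM by auto
  have 1: "v \<cdot> (star s \<cdot> s) = v"
  proof -
    have vt': "t \<cdot> s = v" using vt s_def by simp
    have "v \<cdot> (star s \<cdot> s) = (t \<cdot> s) \<cdot> (star s \<cdot> s)" using vt' by simp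
    also have "\<dots> = t \<cdot> (s \<cdot> star s \<cdot> s)" using t sM ss by simp
    also have "\<dots> = v" using star(2)[OF sM] vt' by simp
    finally show ?thesis .
  qed
  have 2: "star s \<cdot> s = star v \<cdot> (star m \<cdot> m) \<cdot> v" using star_mult[OF m v] s_def sm sv m v by simp
  have c: "(v \<cdot> star v) \<cdot> (star m \<cdot> m) = (star m \<cdot> m) \<cdot> (v \<cdot> star v)"
    using idem_comm[OF _ ss_idem2[OF v] _ ss_idem[OF m]] sm sv m v by simp
  have "v = v \<cdot> (star s \<cdot> s)" using 1 by simp
  also have "\<dots> = v \<cdot> (star v \<cdot> (star m \<cdot> m) \<cdot> v)" using 2 by simp
  also have "\<dots> = (v \<cdot> star v) \<cdot> (star m \<cdot> m) \<cdot> v" using m v sm sv by simp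
  also have "\<dots> = (star m \<cdot> m) \<cdot> (v \<cdot> star v) \<cdot> v" by (simp only: c)
  also have "\<dots> = star m \<cdot> m \<cdot> (v \<cdot> star v \<cdot> v)" using m v sm sv by simp
  also have "\<dots> = star m \<cdot> (m \<cdot> v)" using star(2)[OF v] m v sm by simp
  finally show ?thesis .
qed

lemma key_right: assumes m: "m \<in> M" and v: "v \<in> M" and t: "t \<in> M" and vt: "v = (v \<cdot> m) \<cdot> t"
  shows "v = (v \<cdot> m) \<cdot> star m"
proof -
  define s where "s = v \<cdot> m"
  have sM: "s \<in> M" using s_def m v by simp
  have sm: "star m \<in> M" and sv: "star v \<in> M" and ss: "star s \<in> M" using star m v sM by auto
  have 1: "(s \<cdot> star s) \<cdot> v = v"
  proof -
    have vt': "s \<cdot> t = v" using vt s_def by simp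
    have "(s \<cdot> star s) \<cdot> v = (s \<cdot> star s) \<cdot> (s \<cdot> t)" using vt' by simp
    also have "\<dots> = (s \<cdot> star s \<cdot> s) \<cdot> t" using t sM ss by simp
    also have "\<dots> = v" using star(2)[OF sM] vt' by simp
    finally show ?thesis .
  qed
  have 2: "s \<cdot> star s = v \<cdot> (m \<cdot> star m) \<cdot> star v" using star_mult[OF v m] s_def sm sv m v by simp
  have c: "(m \<cdot> star m) \<cdot> (star v \<cdot> v) = (star v \<cdot> v) \<cdot> (m \<cdot> star m)"
    using idem_comm[OF _ ss_idem2[OF m] _ ss_idem[OF v]] sm sv m v by simp
  have "v = (s \<cdot> star s) \<cdot> v" using 1 by simp
  also have "\<dots> = (v \<cdot> (m \<cdot> star m) \<cdot> star v) \<cdot> v" using 2 by simp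
  also have "\<dots> = v \<cdot> ((m \<cdot> star m) \<cdot> (star v \<cdot> v))" using m v sm sv by simp
  also have "\<dots> = v \<cdot> ((star v \<cdot> v) \<cdot> (m \<cdot> star m))" by (simp only: c)
  also have "\<dots> = (v \<cdot> star v \<cdot> v) \<cdot> (m \<cdot> star m)" using m v sm sv by simp
  also have "\<dots> = (v \<cdot> m) \<cdot> star m" using star(2)[OF v] m v sm by simp
  finally show ?thesis .
qed


lemma J_sub: "x \<in> M \<Longrightarrow> Jideal M mult x \<subseteq> M"
  unfolding Jideal_def by auto
lemma J_self: "x \<in> M \<Longrightarrow> x \<in> Jideal M mult x"
  unfolding Jideal_def by (auto intro!: exI[of _ one])
lemma J_mono: assumes x: "x \<in> M" and y: "y \<in> Jideal M mult x" shows "Jideal M mult y \<subseteq> Jideal M mult x"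
proof
  fix z assume "z \<in> Jideal M mult y"
  then obtain a b where z: "z = a \<cdot> y \<cdot> b" "a \<in> M" "b \<in> M" unfolding Jideal_def by auto
  obtain c d where yy: "y = c \<cdot> x \<cdot> d" "c \<in> M" "d \<in> M" using y unfolding Jideal_def by auto
  have "z = (a \<cdot> c) \<cdot> x \<cdot> (d \<cdot> b)" using z yy x by simp
  then show "z \<in> Jideal M mult x" using z yy x unfolding Jideal_def by fastforce
qed
lemma J_l: assumes e: "e \<in> M" and x: "x \<in> Jideal M mult e" and c: "c \<in> M" shows "c \<cdot> x \<in> Jideal M mult e"
proof -
  obtain a b where ab: "x = a \<cdot> e \<cdot> b" "a \<in> M" "b \<in> M" using x unfolding Jideal_def by blast
  have eq: "c \<cdot> x = (c \<cdot> a) \<cdot> e \<cdot> b" using ab c e by simp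
  have "c \<cdot> a \<in> M" using ab c by simp
  then show ?thesis unfolding Jideal_def using eq ab(3) by blast
qed
lemma J_r: assumes e: "e \<in> M" and x: "x \<in> Jideal M mult e" and c: "c \<in> M" shows "x \<cdot> c \<in> Jideal M mult e"
proof -
  obtain a b where ab: "x = a \<cdot> e \<cdot> b" "a \<in> M" "b \<in> M" using x unfolding Jideal_def by blast
  have eq: "x \<cdot> c = a \<cdot> e \<cdot> (b \<cdot> c)" using ab c e by simp
  have "b \<cdot> c \<in> M" using ab c by simp
  then show ?thesis unfolding Jideal_def using eq ab(2) by blast
qed

lemma J_unit: assumes g: "g \<in> G" and y: "y \<in> M" shows "Jideal M mult (g \<cdot> y) = Jideal M mult y"
proof
  have gM: "g \<in> M" using GM g by simp
  show "Jideal M mult (g \<cdot> y) \<subseteq> Jideal M mult y"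
    using J_mono[OF y J_l[OF y J_self[OF y] gM]] .
  obtain h where h: "h \<in> G" "h \<cdot> g = one" using Ginv[OF g] by auto
  have hM: "h \<in> M" using GM h by simp
  have "h \<cdot> (g \<cdot> y) = y" using h hM gM y assoc[of h g y] by simp
  then have "y \<in> Jideal M mult (g \<cdot> y)" using J_l[OF _ J_self, of "g \<cdot> y" h] gM y hM by simp
  then show "Jideal M mult y \<subseteq> Jideal M mult (g \<cdot> y)" using J_mono gM y by simp
qed

lemma Dchar: "x \<in> Jideal M mult e - Iideal M mult e \<longleftrightarrow> x \<in> Jideal M mult e \<and> Jideal M mult x = Jideal M mult e"
  unfolding Iideal_def by auto

lemma unit_D: assumes e: "e \<in> M" and g: "g \<in> G" and y: "y \<in> M"
  shows "g \<cdot> y \<in> Jideal M mult e - Iideal M mult e \<longleftrightarrow> y \<in> Jideal M mult e - Iideal M mult e"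
proof -
  have gM: "g \<in> M" using GM g by simp
  obtain h where h: "h \<in> G" "h \<cdot> g = one" using Ginv[OF g] by auto
  have hM: "h \<in> M" using GM h by simp
  have hy: "h \<cdot> (g \<cdot> y) = y" using h hM gM y assoc[of h g y] by simp
  have "g \<cdot> y \<in> Jideal M mult e \<longleftrightarrow> y \<in> Jideal M mult e"
    using J_l[OF e, of y g] J_l[OF e, of "g \<cdot> y" h] hy gM hM y by auto
  then show ?thesis unfolding Dchar using J_unit[OF g y] by simp
qed

lemma unit_nz: assumes g: "g \<in> G" and y: "y \<in> M" and "y \<noteq> zero" shows "g \<cdot> y \<noteq> zero"
proof
  assume a: "g \<cdot> y = zero"
  have gM: "g \<in> M" using GM g by simp
  obtain h where h: "h \<in> G" "h \<cdot> g = one" using Ginv[OF g] by auto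
  have hM: "h \<in> M" using GM h by simp
  have hy: "h \<cdot> (g \<cdot> y) = y" using h hM gM y assoc[of h g y] by simp
  then show False using a hM assms by simp
qed

lemma card_left: assumes m: "m \<in> M" and v: "v \<in> M" and J: "v \<in> Jideal M mult (m \<cdot> v)"
  shows "\<exists>t\<in>M. v = t \<cdot> (m \<cdot> v)"
proof -
  obtain s where s: "s = m \<cdot> v" by simp
  have sM: "s \<in> M" using s m v by simp
  obtain a b where ab: "v = a \<cdot> s \<cdot> b" "a \<in> M" "b \<in> M" using J s unfolding Jideal_def by auto
  define Ls where "Ls = (\<lambda>z. z \<cdot> s) ` M"
  define Lv where "Lv = (\<lambda>z. z \<cdot> v) ` M"
  have sub: "Ls \<subseteq> Lv"
  proof
    fix x assume "x \<in> Ls"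
    then obtain z where z: "z \<in> M" "x = z \<cdot> s" unfolding Ls_def by auto
    have "x = (z \<cdot> m) \<cdot> v" using z s m v by simp
    then show "x \<in> Lv" unfolding Lv_def using z m by auto
  qed
  have sub2: "Lv \<subseteq> (\<lambda>w. w \<cdot> b) ` Ls"
  proof
    fix x assume "x \<in> Lv"
    then obtain z where z: "z \<in> M" "x = z \<cdot> v" unfolding Lv_def by auto
    have "x = ((z \<cdot> a) \<cdot> s) \<cdot> b" using z ab sM by simp
    then show "x \<in> (\<lambda>w. w \<cdot> b) ` Ls" unfolding Ls_def using z ab by auto
  qed
  have fin2: "finite Lv" unfolding Lv_def using fin by simp
  have fin1: "finite Ls" unfolding Ls_def using fin by simp
  have "card Lv \<le> card Ls"
    using card_mono[OF finite_imageI[OF fin1] sub2] card_image_le[OF fin1, of "\<lambda>w. w \<cdot> b"] by simp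
  then have "card Ls = card Lv" using card_mono[OF fin2 sub] by simp
  then have "Ls = Lv" using card_subset_eq[OF fin2 sub] by simp
  moreover have "v \<in> Lv" unfolding Lv_def using v by (auto intro!: image_eqI[of _ _ one])
  ultimately show ?thesis unfolding Ls_def using s by auto
qed

lemma card_right: assumes m: "m \<in> M" and v: "v \<in> M" and J: "v \<in> Jideal M mult (v \<cdot> m)"
  shows "\<exists>t\<in>M. v = (v \<cdot> m) \<cdot> t"
proof -
  obtain s where s: "s = v \<cdot> m" by simp
  have sM: "s \<in> M" using s m v by simp
  obtain a b where ab: "v = a \<cdot> s \<cdot> b" "a \<in> M" "b \<in> M" using J s unfolding Jideal_def by auto
  define Ls where "Ls = (\<lambda>z. s \<cdot> z) ` M"
  define Lv where "Lv = (\<lambda>z. v \<cdot> z) ` M"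
  have sub: "Ls \<subseteq> Lv"
  proof
    fix x assume "x \<in> Ls"
    then obtain z where z: "z \<in> M" "x = s \<cdot> z" unfolding Ls_def by auto
    have "x = v \<cdot> (m \<cdot> z)" using z s m v by simp
    then show "x \<in> Lv" unfolding Lv_def using z m by auto
  qed
  have sub2: "Lv \<subseteq> (\<lambda>w. a \<cdot> w) ` Ls"
  proof
    fix x assume "x \<in> Lv"
    then obtain z where z: "z \<in> M" "x = v \<cdot> z" unfolding Lv_def by auto
    have "x = a \<cdot> (s \<cdot> (b \<cdot> z))" using z ab sM by simp
    then show "x \<in> (\<lambda>w. a \<cdot> w) ` Ls" unfolding Ls_def using z ab by auto
  qed
  have fin2: "finite Lv" unfolding Lv_def using fin by simp
  have fin1: "finite Ls" unfolding Ls_def using fin by simp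
  have "card Lv \<le> card Ls"
    using card_mono[OF finite_imageI[OF fin1] sub2] card_image_le[OF fin1, of "\<lambda>w. a \<cdot> w"] by simp
  then have "card Ls = card Lv" using card_mono[OF fin2 sub] by simp
  then have "Ls = Lv" using card_subset_eq[OF fin2 sub] by simp
  moreover have "v \<in> Lv" unfolding Lv_def using v by (auto intro!: image_eqI[of _ _ one])
  ultimately show ?thesis unfolding Ls_def using s by auto
qed


lemma P_sub: "e \<in> M \<Longrightarrow> Pset M mult zero e \<subseteq> M"
  unfolding Pset_def using J_sub by auto

lemma obj: assumes e: "e \<in> M" shows "vect_obj mult one zero G (Pset M mult zero e)"
proof -
  have PM: "Pset M mult zero e \<subseteq> M" using P_sub e .
  have cl: "g \<cdot> v \<in> Pset M mult zero e" if g: "g \<in> insert zero G" and v: "v \<in> Pset M mult zero e" for g v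
  proof (cases "g = zero")
    case True then show ?thesis using v PM unfolding Pset_def by auto
  next
    case False
    then have gG: "g \<in> G" using g by simp
    show ?thesis
    proof (cases "v = zero")
      case True then show ?thesis using gG GM unfolding Pset_def by auto
    next
      case False
      then have "v \<in> Jideal M mult e - Iideal M mult e" using v unfolding Pset_def by auto
      then show ?thesis using unit_D[OF e gG] v PM unfolding Pset_def by auto
    qed
  qed
  show ?thesis unfolding vect_obj_def
  proof (intro conjI ballI impI)
    show "finite (Pset M mult zero e)" using finite_subset[OF PM fin] .
    show "zero \<in> Pset M mult zero e" unfolding Pset_def by simp
  next
    fix g v assume "g \<in> insert zero G" "v \<in> Pset M mult zero e"
    then show "g \<cdot> v \<in> Pset M mult zero e" using cl by blast
  next
    fix v assume "v \<in> Pset M mult zero e" then show "zero \<cdot> v = zero" using PM by auto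
  next
    fix g assume "g \<in> insert zero G" then show "g \<cdot> zero = zero" using GM by auto
  next
    fix v assume "v \<in> Pset M mult zero e" then show "one \<cdot> v = v" using PM by auto
  next
    fix g h v assume "g \<in> G" "h \<in> G" "v \<in> Pset M mult zero e"
    then show "g \<cdot> (h \<cdot> v) = g \<cdot> h \<cdot> v" using PM GM by auto
  next
    fix g v assume "g \<in> G" "v \<in> Pset M mult zero e - {zero}" "g \<cdot> v = v"
    then show "g = one" using PM Gfree by auto
  qed
qed

lemma mor_l: assumes e: "e \<in> M" and m: "m \<in> M"
  shows "vect_mor mult zero G (Pset M mult zero e) (ltrans M mult zero e m)"
proof -
  have PM: "Pset M mult zero e \<subseteq> M" using P_sub e .
  let ?L = "ltrans M mult zero e m"
  let ?D = "Jideal M mult e - Iideal M mult e"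
  have LP: "?L v \<in> Pset M mult zero e" for v unfolding ltrans_def Pset_def by auto
  show ?thesis unfolding vect_mor_def
  proof (intro conjI ballI impI)
    fix v show "?L v \<in> Pset M mult zero e" using LP .
  next
    show "?L zero = zero" unfolding ltrans_def by simp
  next
    fix g v assume g: "g \<in> insert zero G" and v: "v \<in> Pset M mult zero e"
    have vM: "v \<in> M" using v PM by auto
    show "?L (g \<cdot> v) = g \<cdot> ?L v"
    proof (cases "g = zero")
      case True
      have "?L v \<in> M" using LP PM by auto
      then show ?thesis using True vM unfolding ltrans_def by simp
    next
      case False
      then have gG: "g \<in> G" using g by simp
      have gM: "g \<in> M" using GM gG by simp
      show ?thesis
      proof (cases "v = zero")
        case True then show ?thesis using gM unfolding ltrans_def by simp
      next
        case False
        have nz: "g \<cdot> v \<noteq> zero" using unit_nz[OF gG vM False] .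
        have c: "m \<cdot> (g \<cdot> v) = g \<cdot> (m \<cdot> v)"
          using Gcomm[OF gG m] gM m vM by (metis assoc)
        have d: "g \<cdot> (m \<cdot> v) \<in> ?D \<longleftrightarrow> m \<cdot> v \<in> ?D" using unit_D[OF e gG] m vM by simp
        show ?thesis using nz False c d gM unfolding ltrans_def by simp
      qed
    qed
  next
    fix v1 v2 assume v1: "v1 \<in> Pset M mult zero e" and v2: "v2 \<in> Pset M mult zero e"
      and eq: "?L v1 = ?L v2 \<and> ?L v1 \<noteq> zero"
    have v1M: "v1 \<in> M" and v2M: "v2 \<in> M" using v1 v2 PM by auto
    have n1: "v1 \<noteq> zero" and n2: "v2 \<noteq> zero" using eq unfolding ltrans_def by auto
    have D1: "m \<cdot> v1 \<in> ?D" and D2: "m \<cdot> v2 \<in> ?D" using eq unfolding ltrans_def by (auto split: if_splits)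
    have L1: "?L v1 = m \<cdot> v1" and L2: "?L v2 = m \<cdot> v2" using n1 n2 D1 D2 unfolding ltrans_def by auto
    have s: "m \<cdot> v1 = m \<cdot> v2" using eq L1 L2 by simp
    have fin: "v = star m \<cdot> (m \<cdot> v)" if v: "v \<in> Pset M mult zero e" "v \<noteq> zero" "m \<cdot> v \<in> ?D" for v
    proof -
      have vM: "v \<in> M" using v PM by auto
      have vD: "v \<in> ?D" using v unfolding Pset_def by auto
      have "Jideal M mult (m \<cdot> v) = Jideal M mult v" using vD v(3) unfolding Dchar by simp
      then have "v \<in> Jideal M mult (m \<cdot> v)" using J_self[OF vM] by simp
      then obtain t where "t \<in> M" "v = t \<cdot> (m \<cdot> v)" using card_left[OF m vM] by auto
      then show ?thesis using key_left[OF m vM] by simp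
    qed
    have "v1 = v2" using fin[OF v1 n1 D1] fin[OF v2 n2 D2] s by simp
    then show "orbit mult G v1 = orbit mult G v2" by simp
  qed
qed

lemma mor_r: assumes e: "e \<in> M" and m: "m \<in> M"
  shows "vect_mor mult zero G (Pset M mult zero e) (rtrans M mult zero e m)"
proof -
  have PM: "Pset M mult zero e \<subseteq> M" using P_sub e .
  let ?L = "rtrans M mult zero e m"
  let ?D = "Jideal M mult e - Iideal M mult e"
  have LP: "?L v \<in> Pset M mult zero e" for v unfolding rtrans_def Pset_def by auto
  show ?thesis unfolding vect_mor_def
  proof (intro conjI ballI impI)
    fix v show "?L v \<in> Pset M mult zero e" using LP .
  next
    show "?L zero = zero" unfolding rtrans_def by simp
  next
    fix g v assume g: "g \<in> insert zero G" and v: "v \<in> Pset M mult zero e"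
    have vM: "v \<in> M" using v PM by auto
    show "?L (g \<cdot> v) = g \<cdot> ?L v"
    proof (cases "g = zero")
      case True
      have "?L v \<in> M" using LP PM by auto
      then show ?thesis using True vM unfolding rtrans_def by simp
    next
      case False
      then have gG: "g \<in> G" using g by simp
      have gM: "g \<in> M" using GM gG by simp
      show ?thesis
      proof (cases "v = zero")
        case True then show ?thesis using gM unfolding rtrans_def by simp
      next
        case False
        have nz: "g \<cdot> v \<noteq> zero" using unit_nz[OF gG vM False] .
        have c: "(g \<cdot> v) \<cdot> m = g \<cdot> (v \<cdot> m)"
          using gM m vM by simp
        have d: "g \<cdot> (v \<cdot> m) \<in> ?D \<longleftrightarrow> v \<cdot> m \<in> ?D" using unit_D[OF e gG] m vM by simp
        show ?thesis using nz False c d gM unfolding rtrans_def by simp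
      qed
    qed
  next
    fix v1 v2 assume v1: "v1 \<in> Pset M mult zero e" and v2: "v2 \<in> Pset M mult zero e"
      and eq: "?L v1 = ?L v2 \<and> ?L v1 \<noteq> zero"
    have v1M: "v1 \<in> M" and v2M: "v2 \<in> M" using v1 v2 PM by auto
    have n1: "v1 \<noteq> zero" and n2: "v2 \<noteq> zero" using eq unfolding rtrans_def by auto
    have D1: "v1 \<cdot> m \<in> ?D" and D2: "v2 \<cdot> m \<in> ?D" using eq unfolding rtrans_def by (auto split: if_splits)
    have L1: "?L v1 = v1 \<cdot> m" and L2: "?L v2 = v2 \<cdot> m" using n1 n2 D1 D2 unfolding rtrans_def by auto
    have s: "v1 \<cdot> m = v2 \<cdot> m" using eq L1 L2 by simp
    have fin: "v = (v \<cdot> m) \<cdot> star m" if v: "v \<in> Pset M mult zero e" "v \<noteq> zero" "v \<cdot> m \<in> ?D" for v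
    proof -
      have vM: "v \<in> M" using v PM by auto
      have vD: "v \<in> ?D" using v unfolding Pset_def by auto
      have "Jideal M mult (v \<cdot> m) = Jideal M mult v" using vD v(3) unfolding Dchar by simp
      then have "v \<in> Jideal M mult (v \<cdot> m)" using J_self[OF vM] by simp
      then obtain t where "t \<in> M" "v = (v \<cdot> m) \<cdot> t" using card_right[OF m vM] by auto
      then show ?thesis using key_right[OF m vM] by simp
    qed
    have "v1 = v2" using fin[OF v1 n1 D1] fin[OF v2 n2 D2] s by simp
    then show "orbit mult G v1 = orbit mult G v2" by simp
  qed
qed

end

theorem mainTheorem11:
  fixes M G :: "'m set" and mult :: "'m \<Rightarrow> 'm \<Rightarrow> 'm" and one zero :: 'm
  assumes "hatG_linear_monoid M mult one zero G"
    and "inverse_monoid M mult"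
  shows "left_inductive M mult one zero G \<and> right_inductive M mult one zero G"
proof -
  interpret im M mult one zero G using assms by (unfold_locales)
  show ?thesis unfolding left_inductive_def right_inductive_def idempotent_def
    using obj mor_l mor_r by blast
qed

end
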